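(* Consider the variation of the temporal graph discovery game on temporal multigraphs. For all $\delta,k\in\mathbb N^+$ and $T_{\max}\ge 4$, there is an infinite family of temporal graphs $\{\mathcal G_n\}_{n\in\mathbb N}$ such that $\mathcal G_n$ has $\Theta(n)$ nodes and the minimum number of rounds required to win the game grows in $\Omega\big(n(T_{\max}-3)/(\delta k)\big)$. Also, all graphs in the family are temporally connected.
   Context: A temporal multigraph $\mathcal G=(V,E,\lambda)$ with lifetime $T_{\max}$ has a finite multiset $E$ of undirected edges (parallel edges allowed) and a labeling $\lambda:E\to\{1,\dots,T_{\max}\}$, no two parallel edges having the same label; edge $e$ is present only at time $\lambda(e)$. An ordinary temporal graph is the special case without parallel edges. A temporal path is a path with strictly increasing labels; $\mathcal G$ is temporally connected if every node reaches every other by a temporal path. Infection model with parameter $\delta$: a set $S\subseteq V\times[0,T_{\max}]$ of at most $k$ seed infections; a seed $(u,t)$ makes $u$ infected at time $t$; otherwise a susceptible node $u$ becomes infected at time $t$ iff some neighbour $v$ infectious at time $t$ has an edge $uv$ with label $t$ (exactly one infector recorded if several exist). A node infected at time $t$ is infectious at times $t+1,\dots,t+\delta$ and resistant afterwards. The infection log records which node infected which at what time. Game: the Discoverer knows $V$ and the static multigraph; each round it submits at most $k$ seeds and the Adversary answers with a consistent infection log under some labeling consistent with all previous answers (adaptive); the Discoverer wins iff its finally submitted labeling equals the Adversary's final labeling consistent with all logs. *)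

theory Defs
  imports Main "HOL-Library.Extended_Nat"
begin

text \<open>
A temporal multigraph on node type 'v is represented by its node set V and a
function Lab assigning to every unordered pair {u,v} the set of labels of the
(parallel) edges between u and v.  Since no two parallel edges carry the same
label, the multiset of labelled edges between u and v is exactly this set, and
the number of parallel edges between u and v is card (Lab {u,v}).  (Parallel
edges are interchangeable, so two labellings are equal iff they assign the same
label sets to all node pairs.)  Edges are present only at their label time.
\<close>

type_synonym 'v labeling = "'v set \<Rightarrow> nat set"
type_synonym 'v tgraph = "'v set \<times> 'v labeling"

definition nodes :: "'v tgraph \<Rightarrow> 'v set" where
  "nodes G = fst G"

definition labs :: "'v tgraph \<Rightarrow> 'v labeling" where
  "labs G = snd G"

definition is_labeling :: "nat \<Rightarrow> 'v set \<Rightarrow> 'v labeling \<Rightarrow> bool" where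
  "is_labeling Tmax V lam \<longleftrightarrow>
     (\<forall>p. lam p \<subseteq> {1..Tmax}) \<and>
     (\<forall>p. lam p \<noteq> {} \<longrightarrow> p \<subseteq> V \<and> card p = 2)"

definition temporal_multigraph :: "nat \<Rightarrow> 'v tgraph \<Rightarrow> bool" where
  "temporal_multigraph Tmax G \<longleftrightarrow> finite (nodes G) \<and> is_labeling Tmax (nodes G) (labs G)"

definition static_mult :: "'v labeling \<Rightarrow> 'v set \<Rightarrow> nat" where
  "static_mult lam p = card (lam p)"

definition labelings_of :: "nat \<Rightarrow> 'v set \<Rightarrow> ('v set \<Rightarrow> nat) \<Rightarrow> 'v labeling set" where
  "labelings_of Tmax V m = {lam. is_labeling Tmax V lam \<and> static_mult lam = m}"

definition temporal_path :: "'v labeling \<Rightarrow> 'v list \<Rightarrow> nat list \<Rightarrow> bool" where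
  "temporal_path lam vs ts \<longleftrightarrow>
     vs \<noteq> [] \<and> distinct vs \<and> length ts + 1 = length vs \<and>
     (\<forall>i < length ts. ts ! i \<in> lam {vs ! i, vs ! Suc i}) \<and>
     sorted_wrt (<) ts"

definition temporally_reaches :: "'v tgraph \<Rightarrow> 'v \<Rightarrow> 'v \<Rightarrow> bool" where
  "temporally_reaches G u w \<longleftrightarrow>
     (\<exists>vs ts. temporal_path (labs G) vs ts \<and> hd vs = u \<and> last vs = w)"

definition temporally_connected :: "'v tgraph \<Rightarrow> bool" where
  "temporally_connected G \<longleftrightarrow>
     (\<forall>u \<in> nodes G. \<forall>w \<in> nodes G. temporally_reaches G u w)"

text \<open>Infection process.  inf_state lam delta S t u = Some s iff node u has been
infected at time s \<le> t (None: still susceptible after time t).\<close>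
fun inf_state :: "'v labeling \<Rightarrow> nat \<Rightarrow> ('v \<times> nat) set \<Rightarrow> nat \<Rightarrow> 'v \<Rightarrow> nat option" where
  "inf_state lam delta S 0 = (\<lambda>u. if (u, 0) \<in> S then Some 0 else None)"
| "inf_state lam delta S (Suc t) = (\<lambda>u.
     case inf_state lam delta S t u of
       Some s \<Rightarrow> Some s
     | None \<Rightarrow>
         (if (u, Suc t) \<in> S \<or>
             (\<exists>v. Suc t \<in> lam {u, v} \<and>
                  (case inf_state lam delta S t v of
                     Some s \<Rightarrow> s < Suc t \<and> Suc t \<le> s + delta
                   | None \<Rightarrow> False))
          then Some (Suc t) else None))"

definition infectious_at :: "'v labeling \<Rightarrow> nat \<Rightarrow> ('v \<times> nat) set \<Rightarrow> 'v \<Rightarrow> nat \<Rightarrow> bool" where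
  "infectious_at lam delta S v t \<longleftrightarrow>
     (\<exists>s. inf_state lam delta S t v = Some s \<and> s + 1 \<le> t \<and> t \<le> s + delta)"

text \<open>Infection log: a set of triples (v, u, t) meaning "v infected u at time t".
Seeded infections are not recorded as transmissions (the Discoverer knows the
seeds); every node infected by transmission gets exactly one recorded infector,
which must be a valid one.\<close>
definition valid_log :: "nat \<Rightarrow> 'v labeling \<Rightarrow> nat \<Rightarrow> ('v \<times> nat) set
                          \<Rightarrow> ('v \<times> 'v \<times> nat) set \<Rightarrow> bool" where
  "valid_log Tmax lam delta S Lg \<longleftrightarrow>
     (\<forall>(v, u, t) \<in> Lg. inf_state lam delta S Tmax u = Some t \<and> (u, t) \<notin> S \<and>
                        t \<in> lam {u, v} \<and> infectious_at lam delta S v t) \<and>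
     (\<forall>u t. inf_state lam delta S Tmax u = Some t \<and> (u, t) \<notin> S \<longrightarrow>
            (\<exists>!v. (v, u, t) \<in> Lg))"

text \<open>The Discoverer's knowledge is the set L of labellings consistent
with all logs so far.  can_win r L: the Discoverer has a strategy that, against
every (adaptive) Adversary, wins using at most r further rounds, i.e. forces the
set of consistent labellings down to a single one (only then is its final
submitted labelling guaranteed to equal the Adversary's final labelling).\<close>
fun can_win :: "nat \<Rightarrow> nat \<Rightarrow> nat \<Rightarrow> 'v set \<Rightarrow> nat \<Rightarrow> 'v labeling set \<Rightarrow> bool" where
  "can_win Tmax delta k V 0 L = (\<exists>lam. L \<subseteq> {lam})"
| "can_win Tmax delta k V (Suc r) L =
     ((\<exists>lam. L \<subseteq> {lam}) \<or>
      (\<exists>S. S \<subseteq> V \<times> {0..Tmax} \<and> card S \<le> k \<and>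
         (\<forall>lam \<in> L. \<forall>Lg. valid_log Tmax lam delta S Lg \<longrightarrow>
             can_win Tmax delta k V r {lam' \<in> L. valid_log Tmax lam' delta S Lg})))"

definition min_rounds :: "nat \<Rightarrow> nat \<Rightarrow> nat \<Rightarrow> 'v tgraph \<Rightarrow> enat" where
  "min_rounds Tmax delta k G =
     (let L0 = labelings_of Tmax (nodes G) (static_mult (labs G)) in
      if \<exists>r. can_win Tmax delta k (nodes G) r L0
      then enat (LEAST r. can_win Tmax delta k (nodes G) r L0)
      else \<infinity>)"

end

theory Submission
  imports Defs
begin

context fixes lam :: "'v labeling" and d :: nat and S :: "('v \<times> nat) set" begin

lemma inf_le: "inf_state lam d S t u = Some s \<Longrightarrow> s \<le> t"
  by (induction t arbitrary: s) (auto split: option.splits if_splits)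

lemma inf_mono: "inf_state lam d S t u = Some s \<Longrightarrow> t \<le> t' \<Longrightarrow> inf_state lam d S t' u = Some s"
proof (induction t')
  case 0 then show ?case by simp
next
  case (Suc t')
  show ?case
  proof (cases "t \<le> t'")
    case True
    with Suc have "inf_state lam d S t' u = Some s" by blast
    then show ?thesis by simp
  next
    case False
    with Suc have "t = Suc t'" by simp
    with Suc show ?thesis by simp
  qed
qed

lemma inf_none_lt: "inf_state lam d S t' u = None \<Longrightarrow> inf_state lam d S t u = Some s \<Longrightarrow> t' < s"
proof (induction t arbitrary: s)
  case 0
  then have "inf_state lam d S t' u = Some s" using inf_mono[of 0 u s t'] by simp
  then show ?case using 0 by simp
next
  case (Suc t)
  show ?case
  proof (cases "inf_state lam d S t u")
    case None
    with Suc.prems have "s = Suc t" by (simp split: if_splits)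
    show ?thesis
    proof (rule ccontr)
      assume "\<not> t' < s"
      then have "inf_state lam d S t' u = Some s" using inf_mono[OF Suc.prems(2)] \<open>s = Suc t\<close> by simp
      then show False using Suc.prems by simp
    qed
  next
    case (Some s')
    with Suc.prems have "s' = s" by simp
    with Suc.IH Suc.prems Some show ?thesis by blast
  qed
qed

lemma inf_between: "inf_state lam d S t u = Some s \<Longrightarrow> s \<le> t' \<Longrightarrow> t' \<le> t \<Longrightarrow> inf_state lam d S t' u = Some s"
proof (cases "inf_state lam d S t' u")
  case None
  assume "inf_state lam d S t u = Some s" "s \<le> t'"
  with inf_none_lt[OF None] show ?thesis by force
next
  case (Some s')
  assume "inf_state lam d S t u = Some s" "t' \<le> t"
  with inf_mono[OF Some] Some show ?thesis by simp
qed

lemma inf_before: "inf_state lam d S t u = Some s \<Longrightarrow> t' < s \<Longrightarrow> inf_state lam d S t' u = None"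
proof (cases "inf_state lam d S t' u")
  case (Some s')
  assume a: "inf_state lam d S t u = Some s" "t' < s"
  have "s' \<le> t'" using inf_le[OF Some] .
  moreover have "t' \<le> t" using a inf_le[OF a(1)] by simp
  ultimately have "inf_state lam d S t u = Some s'" using inf_mono[OF Some] by simp
  with a \<open>s' \<le> t'\<close> show ?thesis by simp
qed simp

lemma valid_log_exists: "\<exists>Lg. valid_log Tm lam d S Lg"
proof -
  define R where "R = (\<lambda>u t v. t \<in> lam {u, v} \<and> infectious_at lam d S v t)"
  have ex: "\<exists>v. R u t v" if h: "inf_state lam d S Tm u = Some t" "(u, t) \<notin> S" for u t
  proof -
    have tt: "inf_state lam d S t u = Some t" using inf_between[OF h(1)] inf_le[OF h(1)] by simp
    have "t \<noteq> 0"
    proof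
      assume "t = 0" with tt h(2) show False by (simp split: if_splits)
    qed
    then obtain t' where t': "t = Suc t'" by (cases t) auto
    have none: "inf_state lam d S t' u = None" using inf_before[OF tt] t' by simp
    from tt t' none h(2) obtain v s where v: "t \<in> lam {u, v}" "inf_state lam d S t' v = Some s" "s < t" "t \<le> s + d"
      by (auto split: if_splits option.splits)
    have "inf_state lam d S t v = Some s" using inf_mono[OF v(2)] t' by simp
    with v show ?thesis unfolding R_def infectious_at_def by auto
  qed
  define Lg where "Lg = {(v, u, t). inf_state lam d S Tm u = Some t \<and> (u, t) \<notin> S \<and> v = (SOME v. R u t v)}"
  have "valid_log Tm lam d S Lg"
    unfolding valid_log_def
  proof (intro conjI allI impI)
    show "\<forall>(v, u, t)\<in>Lg. inf_state lam d S Tm u = Some t \<and> (u, t) \<notin> S \<and> t \<in> lam {u, v} \<and> infectious_at lam d S v t"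
    proof (clarify)
      fix v u t assume "(v, u, t) \<in> Lg"
      then have h: "inf_state lam d S Tm u = Some t" "(u, t) \<notin> S" "v = (SOME v. R u t v)" unfolding Lg_def by auto
      have "R u t v" using someI_ex[OF ex[OF h(1,2)]] h(3) by simp
      with h show "inf_state lam d S Tm u = Some t \<and> (u, t) \<notin> S \<and> t \<in> lam {u, v} \<and> infectious_at lam d S v t"
        unfolding R_def by simp
    qed
  next
    fix u t assume "inf_state lam d S Tm u = Some t \<and> (u, t) \<notin> S"
    then show "\<exists>!v. (v, u, t) \<in> Lg" unfolding Lg_def by auto
  qed
  then show ?thesis by blast
qed
end

definition lamx :: "nat \<Rightarrow> nat \<Rightarrow> (nat \<Rightarrow> nat) \<Rightarrow> nat labeling" where
  "lamx n Tm x p = {t. (\<exists>j. 1 \<le> j \<and> j \<le> 2*n \<and> p = {0, j}) \<and> (t = 1 \<or> t = Tm)}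
     \<union> {t. \<exists>i<n. p = {2*i+1, 2*i+2} \<and> 1 \<le> t \<and> t \<le> Tm \<and> t \<noteq> x i}"

lemma pair_eq: "{2*i+1, 2*i+2} = {2*i'+1, 2*(i'::nat)+2} \<longleftrightarrow> i = i'"
  by (auto simp: doubleton_eq_iff)

lemma lamx_pair: "i < n \<Longrightarrow> lamx n Tm x {2*i+1, 2*i+2} = {1..Tm} - {x i}"
  unfolding lamx_def by (auto simp: doubleton_eq_iff)

lemma lamx_hub: "1 \<le> j \<Longrightarrow> j \<le> 2*n \<Longrightarrow> lamx n Tm x {0, j} = {1, Tm}"
  unfolding lamx_def by (auto simp: doubleton_eq_iff)

lemma lamx_hub': "1 \<le> j \<Longrightarrow> j \<le> 2*n \<Longrightarrow> lamx n Tm x {j, 0} = {1, Tm}"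
proof -
  assume "1 \<le> j" "j \<le> 2*n"
  moreover have "{j, 0} = {0, j}" by auto
  ultimately show ?thesis using lamx_hub by metis
qed

lemma lamx_diff: "lamx n Tm x p \<noteq> lamx n Tm y p \<Longrightarrow> \<exists>i<n. p = {2*i+1, 2*i+2} \<and> x i \<noteq> y i"
proof (rule ccontr)
  assume a: "lamx n Tm x p \<noteq> lamx n Tm y p" "\<not> (\<exists>i<n. p = {2*i+1, 2*i+2} \<and> x i \<noteq> y i)"
  have "lamx n Tm x p = lamx n Tm y p"
    unfolding lamx_def using a(2) by auto
  with a(1) show False by simp
qed

lemma lamx_nbr:
  assumes "i < n" "v = 2*i+1 \<or> v = 2*i+2" "t \<in> lamx n Tm x {v, w}"
  shows "w = 0 \<or> {v, w} = {2*i+1, 2*i+2}"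
proof -
  from assms(3) consider (h) j where "{v, w} = {0, j}" | (p) i' where "{v, w} = {2*i'+1, 2*i'+2}"
    unfolding lamx_def by blast
  then show ?thesis
  proof cases
    case h then show ?thesis using assms(2) by (auto simp: doubleton_eq_iff)
  next
    case p
    then have "v = 2*i'+1 \<or> v = 2*i'+2" by (auto simp: doubleton_eq_iff)
    with assms(2) have "i' = i" by presburger
    with p show ?thesis by simp
  qed
qed

definition probes :: "(nat \<times> nat) set \<Rightarrow> nat \<Rightarrow> nat set" where
  "probes S i = (\<lambda>(v, s). Suc s) ` (S \<inter> ({2*i+1, 2*i+2} \<times> UNIV))"

lemma lemA:
  assumes i: "i < n"
    and uv: "u = 2*i+1 \<or> u = 2*i+2" "v = 2*i+1 \<or> v = 2*i+2" "u \<noteq> v"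
    and su: "inf_state (lamx n Tm y) d S t u = None"
    and sv: "inf_state (lamx n Tm y) d S t v = Some s"
    and sd: "Suc t \<le> s + d"
    and yi: "y i = Suc t" "2 \<le> y i" "y i < Tm"
  shows "(v, t) \<in> S"
proof -
  let ?L = "lamx n Tm y"
  have uvp: "{u, v} = {2*i+1, 2*i+2}" "{v, u} = {2*i+1, 2*i+2}" using uv by auto
  obtain t' where t': "t = Suc t'" using yi by (cases t) auto
  have "s \<le> t" using inf_le[OF sv] .
  show ?thesis
  proof (cases "s \<le> t'")
    case True
    have sv': "inf_state ?L d S t' v = Some s" using inf_between[OF sv True] t' by simp
    have su': "inf_state ?L d S t' u = None" using su t' by (auto split: option.splits)
    have "t \<in> ?L {u, v}" using uvp lamx_pair[OF i, of Tm y] yi t' by auto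
    then have "inf_state ?L d S (Suc t') u = Some (Suc t')"
      using su' sv' True sd t' by (auto intro!: exI[of _ v])
    with su t' show ?thesis by simp
  next
    case False
    with \<open>s \<le> t\<close> t' have st: "s = t" by simp
    have sv': "inf_state ?L d S t' v = None" using inf_before[OF sv] st t' by simp
    have su': "inf_state ?L d S t' u = None" using su t' by (auto split: option.splits)
    show ?thesis
    proof (rule ccontr)
      assume nS: "(v, t) \<notin> S"
      from sv sv' st t' nS obtain w s0 where w: "t \<in> ?L {v, w}" "inf_state ?L d S t' w = Some s0" "s0 < t" "t \<le> s0 + d"
        by (auto split: if_splits option.splits)
      from lamx_nbr[OF i uv(2) w(1)] have "w = 0 \<or> {v, w} = {2*i+1, 2*i+2}" .
      then show False
      proof
        assume w0: "w = 0"
        have vr: "1 \<le> v" "v \<le> 2*n" using uv i by auto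
        have "t \<in> {1, Tm}" using w(1) w0 lamx_hub'[OF vr] by simp
        with yi have t1: "t = 1" by auto
        have ur: "1 \<le> u" "u \<le> 2*n" using uv i by auto
        have "1 \<in> ?L {u, 0}" using lamx_hub'[OF ur] by simp
        then have "inf_state ?L d S (Suc 0) u = Some 1"
          using su' w w0 t1 t' by (auto intro!: exI[of _ 0] split: if_splits)
        with su t1 show False by simp
      next
        assume "{v, w} = {2*i+1, 2*i+2}"
        with uvp have "w = u" by (auto simp: doubleton_eq_iff)
        with w(2) su' show False by simp
      qed
    qed
  qed
qed

definition compat :: "nat \<Rightarrow> nat \<Rightarrow> (nat \<times> nat) set \<Rightarrow> (nat \<Rightarrow> nat) \<Rightarrow> (nat \<Rightarrow> nat) \<Rightarrow> bool" where
  "compat n Tm S x y \<longleftrightarrow> (\<forall>i<n. (x i = y i \<or> (x i \<notin> probes S i \<and> y i \<notin> probes S i))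
       \<and> 2 \<le> x i \<and> x i < Tm \<and> 2 \<le> y i \<and> y i < Tm)"

lemma compat_sym: "compat n Tm S x y \<Longrightarrow> compat n Tm S y x"
  unfolding compat_def by metis

lemma probesI: "(v, t) \<in> S \<Longrightarrow> v = 2*i+1 \<or> v = 2*i+2 \<Longrightarrow> Suc t \<in> probes S i"
  unfolding probes_def by (auto intro!: image_eqI[of _ _ "(v, t)"])

lemma pair_elems: "{u, v} = {2*i+1, 2*(i::nat)+2} \<Longrightarrow> (u = 2*i+1 \<or> u = 2*i+2) \<and> (v = 2*i+1 \<or> v = 2*i+2) \<and> u \<noteq> v"
  by (auto simp: doubleton_eq_iff)

lemma lemB1:
  assumes c: "compat n Tm S x y"
    and su: "inf_state (lamx n Tm y) d S t u = None"
    and tx: "Suc t \<in> lamx n Tm x {u, v}"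
    and sv: "inf_state (lamx n Tm y) d S t v = Some s"
    and sd: "Suc t \<le> s + d"
  shows "Suc t \<in> lamx n Tm y {u, v}"
proof (cases "lamx n Tm x {u, v} = lamx n Tm y {u, v}")
  case True with tx show ?thesis by simp
next
  case False
  from lamx_diff[OF False] obtain i where i: "i < n" "{u, v} = {2*i+1, 2*i+2}" "x i \<noteq> y i" by blast
  from c i have np: "x i \<notin> probes S i" "y i \<notin> probes S i" "2 \<le> y i" "y i < Tm" unfolding compat_def by auto
  from pair_elems[OF i(2)] have uv: "u = 2*i+1 \<or> u = 2*i+2" "v = 2*i+1 \<or> v = 2*i+2" "u \<noteq> v" by auto
  have tx': "Suc t \<in> {1..Tm} - {x i}" using tx i lamx_pair by metis
  have "Suc t \<noteq> y i"
  proof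
    assume yi: "Suc t = y i"
    have "(v, t) \<in> S" using lemA[OF i(1) uv su sv sd yi[symmetric] np(3,4)] .
    from probesI[OF this uv(2)] yi np(2) show False by simp
  qed
  with tx' show ?thesis using lamx_pair[OF i(1)] i(2) by simp
qed

lemma lemB:
  assumes c: "compat n Tm S x y"
  shows "inf_state (lamx n Tm x) d S t = inf_state (lamx n Tm y) d S t"
proof (induction t)
  case 0 show ?case by simp
next
  case (Suc t)
  have c': "compat n Tm S y x" using compat_sym[OF c] .
  show ?case
  proof
    fix u
    show "inf_state (lamx n Tm x) d S (Suc t) u = inf_state (lamx n Tm y) d S (Suc t) u"
    proof (cases "inf_state (lamx n Tm y) d S t u")
      case (Some s) with Suc show ?thesis by simp
    next
      case None
      have eq: "(\<exists>v. Suc t \<in> lamx n Tm x {u, v} \<and> (case inf_state (lamx n Tm y) d S t v of Some s \<Rightarrow> s < Suc t \<and> Suc t \<le> s + d | None \<Rightarrow> False))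
        = (\<exists>v. Suc t \<in> lamx n Tm y {u, v} \<and> (case inf_state (lamx n Tm y) d S t v of Some s \<Rightarrow> s < Suc t \<and> Suc t \<le> s + d | None \<Rightarrow> False))"
      proof
        assume "\<exists>v. Suc t \<in> lamx n Tm x {u, v} \<and> (case inf_state (lamx n Tm y) d S t v of Some s \<Rightarrow> s < Suc t \<and> Suc t \<le> s + d | None \<Rightarrow> False)"
        then obtain v s where v: "Suc t \<in> lamx n Tm x {u, v}" "inf_state (lamx n Tm y) d S t v = Some s" "s < Suc t" "Suc t \<le> s + d"
          by (auto split: option.splits)
        have "Suc t \<in> lamx n Tm y {u, v}" using lemB1[OF c None v(1,2,4)] .
        with v show "\<exists>v. Suc t \<in> lamx n Tm y {u, v} \<and> (case inf_state (lamx n Tm y) d S t v of Some s \<Rightarrow> s < Suc t \<and> Suc t \<le> s + d | None \<Rightarrow> False)"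
          by auto
      next
        assume "\<exists>v. Suc t \<in> lamx n Tm y {u, v} \<and> (case inf_state (lamx n Tm y) d S t v of Some s \<Rightarrow> s < Suc t \<and> Suc t \<le> s + d | None \<Rightarrow> False)"
        then obtain v s where v: "Suc t \<in> lamx n Tm y {u, v}" "inf_state (lamx n Tm y) d S t v = Some s" "s < Suc t" "Suc t \<le> s + d"
          by (auto split: option.splits)
        have None': "inf_state (lamx n Tm x) d S t u = None" using None Suc by simp
        have v2: "inf_state (lamx n Tm x) d S t v = Some s" using v(2) Suc by simp
        have "Suc t \<in> lamx n Tm x {u, v}" using lemB1[OF c' None' v(1) v2 v(4)] .
        with v show "\<exists>v. Suc t \<in> lamx n Tm x {u, v} \<and> (case inf_state (lamx n Tm y) d S t v of Some s \<Rightarrow> s < Suc t \<and> Suc t \<le> s + d | None \<Rightarrow> False)"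
          by auto
      qed
      show ?thesis using None Suc eq by simp
    qed
  qed
qed

lemma lemC:
  assumes c: "compat n Tm S x y"
    and vl: "valid_log Tm (lamx n Tm x) d S Lg"
  shows "valid_log Tm (lamx n Tm y) d S Lg"
proof -
  have st: "\<And>t. inf_state (lamx n Tm x) d S t = inf_state (lamx n Tm y) d S t" using lemB[OF c] .
  have ia: "\<And>v t. infectious_at (lamx n Tm x) d S v t = infectious_at (lamx n Tm y) d S v t"
    unfolding infectious_at_def using st by simp
  have lab: "t \<in> lamx n Tm y {u, v}" if h: "(v, u, t) \<in> Lg" for v u t
  proof -
    from vl h have h2: "inf_state (lamx n Tm y) d S Tm u = Some t" "(u, t) \<notin> S" "t \<in> lamx n Tm x {u, v}"
       "infectious_at (lamx n Tm y) d S v t"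
      unfolding valid_log_def using st ia by auto
    show ?thesis
    proof (cases "lamx n Tm x {u, v} = lamx n Tm y {u, v}")
      case True with h2 show ?thesis by simp
    next
      case False
      from lamx_diff[OF False] obtain i where i: "i < n" "{u, v} = {2*i+1, 2*i+2}" "x i \<noteq> y i" by blast
      from c i have np: "y i \<notin> probes S i" "2 \<le> y i" "y i < Tm" unfolding compat_def by auto
      from pair_elems[OF i(2)] have uv: "u = 2*i+1 \<or> u = 2*i+2" "v = 2*i+1 \<or> v = 2*i+2" "u \<noteq> v" by auto
      have tx': "t \<in> {1..Tm} - {x i}" using h2(3) i lamx_pair by metis
      have "t \<noteq> y i"
      proof
        assume yi: "t = y i"
        then obtain t' where t': "t = Suc t'" using np by (cases t) force+
        from h2(4) obtain s where s: "inf_state (lamx n Tm y) d S t v = Some s" "s + 1 \<le> t" "t \<le> s + d"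
          unfolding infectious_at_def by auto
        have sv: "inf_state (lamx n Tm y) d S t' v = Some s" using inf_between[OF s(1)] s(2) t' by simp
        have su: "inf_state (lamx n Tm y) d S t' u = None" using inf_before[OF h2(1)] t' by simp
        have "(v, t') \<in> S" using lemA[OF i(1) uv su sv] s(3) t' yi np(2,3) by simp
        from probesI[OF this uv(2)] yi t' np(1) show False by simp
      qed
      with tx' show ?thesis using lamx_pair[OF i(1)] i(2) by simp
    qed
  qed
  show ?thesis using vl lab unfolding valid_log_def using st ia by fastforce
qed


definition FX :: "nat \<Rightarrow> nat \<Rightarrow> (nat \<Rightarrow> nat set) \<Rightarrow> nat labeling set" where
  "FX n Tm X = {lamx n Tm x | x. \<forall>i<n. x i \<in> X i}"

definition mu :: "nat \<Rightarrow> (nat \<Rightarrow> nat set) \<Rightarrow> nat" where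
  "mu n X = (\<Sum>i<n. (card (X i) - 1))"

lemma lemE0:
  assumes X: "\<forall>i<n. X i \<noteq> {} \<and> X i \<subseteq> {2..<Tm}"
    and F: "FX n Tm X \<subseteq> L"
    and m: "0 < mu n X"
  shows "\<not> (\<exists>lam. L \<subseteq> {lam})"
proof
  assume "\<exists>lam. L \<subseteq> {lam}"
  then obtain lam where L: "L \<subseteq> {lam}" by blast
  have "\<not> (\<forall>i<n. card (X i) - 1 = 0)"
  proof
    assume "\<forall>i<n. card (X i) - 1 = 0"
    then have "mu n X = 0" unfolding mu_def by simp
    with m show False by simp
  qed
  then obtain i where i: "i < n" "0 < card (X i) - 1" by auto
  have fin: "\<And>j. j < n \<Longrightarrow> finite (X j)" using X by (meson finite_atLeastLessThan finite_subset)
  have "card (X i) \<ge> 2" using i by simp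
  obtain a where a: "a \<in> X i" using X i by blast
  have "X i - {a} \<noteq> {}"
  proof
    assume "X i - {a} = {}"
    then have "X i \<subseteq> {a}" by blast
    then have "card (X i) \<le> 1" using card_mono[of "{a}" "X i"] by simp
    with \<open>card (X i) \<ge> 2\<close> show False by simp
  qed
  then obtain b where b: "b \<in> X i" "b \<noteq> a" by blast
  from a b have ab: "a \<in> X i" "b \<in> X i" "a \<noteq> b" by auto
  define xa where "xa = (\<lambda>j. if j = i then a else Min (X j))"
  define xb where "xb = (\<lambda>j. if j = i then b else Min (X j))"
  have "lamx n Tm xa \<in> FX n Tm X" unfolding FX_def xa_def using ab fin X by (auto intro!: Min_in)
  moreover have "lamx n Tm xb \<in> FX n Tm X" unfolding FX_def xb_def using ab fin X by (auto intro!: Min_in)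
  ultimately have "lamx n Tm xa = lamx n Tm xb" using F L by blast
  then have "lamx n Tm xa {2*i+1, 2*i+2} = lamx n Tm xb {2*i+1, 2*i+2}" by simp
  then have "{1..Tm} - {a} = {1..Tm} - {b}" using lamx_pair[OF i(1)] unfolding xa_def xb_def by simp
  moreover have "X i \<subseteq> {2..<Tm}" using X i by blast
  then have "a \<in> {1..Tm}" "b \<in> {1..Tm}" using ab by auto
  ultimately show False using ab(3) by blast
qed

lemma probes_sum:
  assumes fS: "finite S"
  shows "(\<Sum>i<n. card (probes S i)) \<le> card S"
proof -
  define A where "A = (\<lambda>i. S \<inter> ({2*i+1, 2*i+2} \<times> UNIV))"
  have "(\<Sum>i<n. card (probes S i)) \<le> (\<Sum>i<n. card (A i))"
    by (rule sum_mono) (simp add: probes_def A_def card_image_le fS)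
  also have "\<dots> = card (\<Union>i<n. A i)"
  proof (rule card_UN_disjoint[symmetric])
    show "finite {..<n}" by simp
    show "\<forall>i\<in>{..<n}. finite (A i)" using fS unfolding A_def by simp
    show "\<forall>i\<in>{..<n}. \<forall>j\<in>{..<n}. i \<noteq> j \<longrightarrow> A i \<inter> A j = {}"
      unfolding A_def by auto
  qed
  also have "\<dots> \<le> card S" by (rule card_mono[OF fS]) (auto simp: A_def)
  finally show ?thesis .
qed

lemma lemE:
  assumes fV: "finite V"
  shows "\<forall>X L. (\<forall>i<n. X i \<noteq> {} \<and> X i \<subseteq> {2..<Tm}) \<longrightarrow> FX n Tm X \<subseteq> L \<longrightarrow> r * k < mu n X
     \<longrightarrow> \<not> can_win Tm d k V r L"
proof (induction r)
  case 0
  show ?case using lemE0 by auto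
next
  case (Suc r)
  show ?case
  proof (intro allI impI)
    fix X L
    assume X: "\<forall>i<n. X i \<noteq> {} \<and> X i \<subseteq> {2..<Tm}" and F: "FX n Tm X \<subseteq> L" and m: "Suc r * k < mu n X"
    have fin: "\<And>j. j < n \<Longrightarrow> finite (X j)" using X by (meson finite_atLeastLessThan finite_subset)
    have ns: "\<not> (\<exists>lam. L \<subseteq> {lam})" using lemE0[OF X F] m by simp
    have "\<not> (\<exists>S. S \<subseteq> V \<times> {0..Tm} \<and> card S \<le> k \<and>
         (\<forall>lam \<in> L. \<forall>Lg. valid_log Tm lam d S Lg \<longrightarrow>
             can_win Tm d k V r {lam' \<in> L. valid_log Tm lam' d S Lg}))"
    proof
      assume "\<exists>S. S \<subseteq> V \<times> {0..Tm} \<and> card S \<le> k \<and>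
         (\<forall>lam \<in> L. \<forall>Lg. valid_log Tm lam d S Lg \<longrightarrow>
             can_win Tm d k V r {lam' \<in> L. valid_log Tm lam' d S Lg})"
      then obtain S where S: "S \<subseteq> V \<times> {0..Tm}" "card S \<le> k"
        and W: "\<forall>lam \<in> L. \<forall>Lg. valid_log Tm lam d S Lg \<longrightarrow>
             can_win Tm d k V r {lam' \<in> L. valid_log Tm lam' d S Lg}" by blast
      have fS: "finite S" using S(1) fV by (meson finite_SigmaI finite_atLeastAtMost finite_subset)
      define X' where "X' = (\<lambda>i. if X i - probes S i \<noteq> {} then X i - probes S i else {Min (X i)})"
      have X'X: "\<And>i. i < n \<Longrightarrow> X' i \<subseteq> X i" unfolding X'_def using fin X by (auto intro: Min_in)
      have X'ne: "\<And>i. i < n \<Longrightarrow> X' i \<noteq> {}" unfolding X'_def by auto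
      have X'fin: "\<And>i. i < n \<Longrightarrow> finite (X' i)" using X'X fin finite_subset by blast
      have X'ok: "\<forall>i<n. X' i \<noteq> {} \<and> X' i \<subseteq> {2..<Tm}" using X'X X'ne X by blast
      have per: "card (X i) - 1 \<le> (card (X' i) - 1) + card (probes S i)" if i: "i < n" for i
      proof (cases "X i - probes S i \<noteq> {}")
        case True
        then have "X' i = X i - probes S i" unfolding X'_def by simp
        moreover have "card (X i) \<le> card (X i - probes S i) + card (probes S i)"
        proof -
          have "card (X i) \<le> card ((X i - probes S i) \<union> probes S i)"
            by (rule card_mono) (use fin[OF i] fS in \<open>auto simp: probes_def\<close>)
          also have "\<dots> \<le> card (X i - probes S i) + card (probes S i)" by (rule card_Un_le)
          finally show ?thesis .
        qed
        ultimately have "card (X i) \<le> card (X' i) + card (probes S i)" by simp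
        moreover have "card (X' i) \<ge> 1" using X'ne[OF i] X'fin[OF i] by (simp add: Suc_le_eq card_gt_0_iff)
        ultimately show ?thesis by linarith
      next
        case False
        then have "X i \<subseteq> probes S i" by blast
        then have "card (X i) \<le> card (probes S i)"
          by (rule card_mono[rotated]) (use fS in \<open>simp add: probes_def\<close>)
        then show ?thesis by linarith
      qed
      have "mu n X \<le> (\<Sum>i<n. (card (X' i) - 1) + card (probes S i))"
        unfolding mu_def by (rule sum_mono) (use per in simp)
      also have "\<dots> = mu n X' + (\<Sum>i<n. card (probes S i))" unfolding mu_def by (simp add: sum.distrib)
      also have "\<dots> \<le> mu n X' + k" using probes_sum[OF fS, of n] S(2) by simp
      finally have m': "r * k < mu n X'" using m by simp
      define xs where "xs = (\<lambda>i. Min (X' i))"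
      have xs_in: "\<And>i. i < n \<Longrightarrow> xs i \<in> X' i" unfolding xs_def using X'fin X'ne by (simp add: Min_in)
      have sub: "FX n Tm X' \<subseteq> FX n Tm X" unfolding FX_def using X'X by blast
      have lsL: "lamx n Tm xs \<in> L" using F sub xs_in unfolding FX_def by blast
      obtain Lg where Lg: "valid_log Tm (lamx n Tm xs) d S Lg" using valid_log_exists by blast
      have sub2: "FX n Tm X' \<subseteq> {lam' \<in> L. valid_log Tm lam' d S Lg}"
      proof
        fix lam assume "lam \<in> FX n Tm X'"
        then obtain x where x: "lam = lamx n Tm x" "\<forall>i<n. x i \<in> X' i" unfolding FX_def by blast
        have "lam \<in> L" using \<open>lam \<in> FX n Tm X'\<close> sub F by blast
        moreover have "compat n Tm S xs x"
          unfolding compat_def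
        proof (intro allI impI)
          fix i assume i: "i < n"
          have r1: "xs i \<in> X i" "x i \<in> X i" using xs_in[OF i] x(2) i X'X[OF i] by auto
          have "xs i = x i \<or> (xs i \<notin> probes S i \<and> x i \<notin> probes S i)"
          proof (cases "X i - probes S i \<noteq> {}")
            case True
            then have e: "X' i = X i - probes S i" unfolding X'_def by simp
            have "xs i \<in> X' i" "x i \<in> X' i" using xs_in[OF i] x(2) i by auto
            then show ?thesis unfolding e by blast
          next
            case False
            then show ?thesis using xs_in[OF i] x(2) i unfolding X'_def by auto
          qed
          then show "(xs i = x i \<or> (xs i \<notin> probes S i \<and> x i \<notin> probes S i)) \<and>
              2 \<le> xs i \<and> xs i < Tm \<and> 2 \<le> x i \<and> x i < Tm"
          proof -
            have "X i \<subseteq> {2..<Tm}" using X i by blast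
            with r1 have "xs i \<in> {2..<Tm}" "x i \<in> {2..<Tm}" by auto
            with \<open>xs i = x i \<or> (xs i \<notin> probes S i \<and> x i \<notin> probes S i)\<close> show ?thesis by auto
          qed
        qed
        ultimately show "lam \<in> {lam' \<in> L. valid_log Tm lam' d S Lg}" using lemC Lg x(1) by blast
      qed
      have "\<not> can_win Tm d k V r {lam' \<in> L. valid_log Tm lam' d S Lg}"
        using Suc.IH X'ok sub2 m' by blast
      with W lsL Lg show False by blast
    qed
    with ns show "\<not> can_win Tm d k V (Suc r) L" by simp
  qed
qed


lemma lamx_is_labeling: "1 \<le> Tm \<Longrightarrow> is_labeling Tm {0..2*n} (lamx n Tm x)"
  unfolding is_labeling_def lamx_def by auto

lemma lamx_static:
  assumes "\<forall>i<n. x i \<in> {1..Tm}" "\<forall>i<n. y i \<in> {1..Tm}"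
  shows "static_mult (lamx n Tm x) = static_mult (lamx n Tm y)"
proof
  fix p
  show "static_mult (lamx n Tm x) p = static_mult (lamx n Tm y) p"
  proof (cases "lamx n Tm x p = lamx n Tm y p")
    case True then show ?thesis unfolding static_mult_def by simp
  next
    case False
    from lamx_diff[OF False] obtain i where i: "i < n" "p = {2*i+1, 2*i+2}" by blast
    have "card ({1..Tm} - {x i}) = card ({1..Tm} - {y i})" using assms i(1) by simp
    then show ?thesis unfolding static_mult_def using lamx_pair[OF i(1)] i(2) by simp
  qed
qed

lemma lamx_tc:
  assumes "2 \<le> Tm"
  shows "temporally_connected ({0..2*n}, lamx n Tm x)"
  unfolding temporally_connected_def nodes_def labs_def temporally_reaches_def
proof (intro ballI)
  fix u w assume u: "u \<in> fst ({0..2*n}, lamx n Tm x)" and w: "w \<in> fst ({0..2*n}, lamx n Tm x)"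
  let ?L = "snd ({0..2*n}, lamx n Tm x)"
  have L: "?L = lamx n Tm x" by simp
  show "\<exists>vs ts. temporal_path ?L vs ts \<and> hd vs = u \<and> last vs = w"
  proof (cases "u = w")
    case True
    have "temporal_path ?L [u] []" unfolding temporal_path_def by simp
    with True show ?thesis by fastforce
  next
    case uw: False
    show ?thesis
    proof (cases "u = 0")
      case True
      with uw w have wr: "1 \<le> w" "w \<le> 2*n" by auto
      have "temporal_path ?L [u, w] [1]" unfolding temporal_path_def L using True uw lamx_hub[OF wr] by simp
      then show ?thesis by fastforce
    next
      case u0: False
      with u have ur: "1 \<le> u" "u \<le> 2*n" by auto
      show ?thesis
      proof (cases "w = 0")
        case True
        have "temporal_path ?L [u, w] [1]" unfolding temporal_path_def L using True uw lamx_hub'[OF ur] by simp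
        then show ?thesis by fastforce
      next
        case w0: False
        with w have wr: "1 \<le> w" "w \<le> 2*n" by auto
        have "temporal_path ?L [u, 0, w] [1, Tm]"
          unfolding temporal_path_def L using uw u0 w0 lamx_hub'[OF ur] lamx_hub[OF wr] assms
          by (auto simp: less_Suc_eq nth_Cons')
        then show ?thesis by fastforce
      qed
    qed
  qed
qed

lemma lower_bound:
  assumes Tm: "4 \<le> Tm" and r: "r * k < n * (Tm - 3)"
  shows "enat r < min_rounds Tm d k ({0..2*n}, lamx n Tm (\<lambda>_. 2))"
proof -
  define L0 where "L0 = labelings_of Tm {0..2*n} (static_mult (lamx n Tm (\<lambda>_. 2)))"
  define X0 where "X0 = (\<lambda>i::nat. {2..<Tm})"
  have X0: "\<forall>i<n. X0 i \<noteq> {} \<and> X0 i \<subseteq> {2..<Tm}" unfolding X0_def using Tm by auto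
  have F: "FX n Tm X0 \<subseteq> L0"
  proof
    fix lam assume "lam \<in> FX n Tm X0"
    then obtain x where x: "lam = lamx n Tm x" "\<forall>i<n. x i \<in> {2..<Tm}" unfolding FX_def X0_def by blast
    have "static_mult (lamx n Tm x) = static_mult (lamx n Tm (\<lambda>_. 2))"
      by (rule lamx_static) (use x(2) Tm in auto)
    then show "lam \<in> L0" unfolding L0_def labelings_of_def using x(1) lamx_is_labeling Tm by simp
  qed
  have "mu n X0 = n * (Tm - 3)" unfolding mu_def X0_def by simp
  with r have m: "\<And>r'. r' \<le> r \<Longrightarrow> r' * k < mu n X0"
    by (metis le_less_trans mult_le_mono1)
  have nw: "\<And>r'. r' \<le> r \<Longrightarrow> \<not> can_win Tm d k {0..2*n} r' L0"
    using lemE[of "{0..2*n}"] X0 F m by blast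
  show ?thesis
  proof (cases "\<exists>r. can_win Tm d k {0..2*n} r L0")
    case True
    then have "can_win Tm d k {0..2*n} (LEAST r. can_win Tm d k {0..2*n} r L0) L0" by (rule LeastI_ex)
    then have "r < (LEAST r. can_win Tm d k {0..2*n} r L0)" using nw not_less by blast
    then show ?thesis unfolding min_rounds_def nodes_def labs_def using True L0_def by simp
  next
    case False
    then show ?thesis unfolding min_rounds_def nodes_def labs_def using L0_def by simp
  qed
qed

theorem mainTheorem19:
  "\<exists>c > 0. \<forall>(delta::nat) (k::nat) (Tmax::nat).
     delta \<ge> 1 \<longrightarrow> k \<ge> 1 \<longrightarrow> Tmax \<ge> 4 \<longrightarrow>
     (\<exists>G :: nat \<Rightarrow> nat tgraph.
        (\<forall>n. temporal_multigraph Tmax (G n) \<and> temporally_connected (G n)) \<and>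
        (\<exists>c1 > 0. \<exists>c2 > 0. \<exists>n0. \<forall>n \<ge> n0.
            c1 * real n \<le> real (card (nodes (G n))) \<and>
            real (card (nodes (G n))) \<le> c2 * real n) \<and>
        (\<exists>n0. \<forall>n \<ge> n0. \<forall>r::nat.
            real r < c * real n * (real Tmax - 3) / (real delta * real k) \<longrightarrow>
            enat r < min_rounds Tmax delta k (G n)))"
proof -
  have main: "\<exists>G :: nat \<Rightarrow> nat tgraph.
        (\<forall>n. temporal_multigraph Tmax (G n) \<and> temporally_connected (G n)) \<and>
        (\<exists>c1 > 0. \<exists>c2 > 0. \<exists>n0. \<forall>n \<ge> n0.
            c1 * real n \<le> real (card (nodes (G n))) \<and>
            real (card (nodes (G n))) \<le> c2 * real n) \<and>
        (\<exists>n0. \<forall>n \<ge> n0. \<forall>r::nat.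
            real r < 1 * real n * (real Tmax - 3) / (real delta * real k) \<longrightarrow>
            enat r < min_rounds Tmax delta k (G n))"
    if d: "delta \<ge> 1" and k: "k \<ge> 1" and Tm: "Tmax \<ge> 4" for delta k Tmax :: nat
  proof -
  define G where "G = (\<lambda>n. ({0..2*n}, lamx n Tmax (\<lambda>_. 2)))"
  have A: "\<forall>n. temporal_multigraph Tmax (G n) \<and> temporally_connected (G n)"
    unfolding G_def temporal_multigraph_def nodes_def labs_def
    using lamx_is_labeling lamx_tc Tm by simp
  have bnd: "\<forall>n\<ge>1. 1 * real n \<le> real (card (nodes (G n))) \<and> real (card (nodes (G n))) \<le> 3 * real n"
  proof (intro allI impI)
    fix n :: nat assume "1 \<le> n"
    have c: "card (nodes (G n)) = 2*n+1" unfolding G_def nodes_def by simp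
    show "1 * real n \<le> real (card (nodes (G n))) \<and> real (card (nodes (G n))) \<le> 3 * real n"
      unfolding c using \<open>1 \<le> n\<close> by simp
  qed
  have B: "\<exists>c1 > 0. \<exists>c2 > 0. \<exists>n0. \<forall>n \<ge> n0.
            c1 * real n \<le> real (card (nodes (G n))) \<and>
            real (card (nodes (G n))) \<le> c2 * real n"
    apply (rule exI[of _ "1::real"], rule conjI, simp)
    apply (rule exI[of _ "3::real"], rule conjI, simp)
    apply (rule exI[of _ "1::nat"])
    using bnd by simp
  have C: "\<exists>n0. \<forall>n \<ge> n0. \<forall>r::nat.
            real r < 1 * real n * (real Tmax - 3) / (real delta * real k) \<longrightarrow>
            enat r < min_rounds Tmax delta k (G n)"
  proof (intro exI[of _ 0] allI impI)
    fix n r :: nat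
    assume h: "real r < 1 * real n * (real Tmax - 3) / (real delta * real k)"
    have pos: "0 < real delta * real k" using d k by simp
    have e: "real Tmax - 3 = real (Tmax - 3)" using Tm by simp
    from h pos have h2: "real r * (real delta * real k) < real n * real (Tmax - 3)"
      unfolding e by (simp add: pos_less_divide_eq)
    have "real k \<le> real delta * real k"
    proof -
      have "(1::real) \<le> real delta" using d by simp
      then have "1 * real k \<le> real delta * real k" by (rule mult_right_mono) simp
      then show ?thesis by simp
    qed
    then have "real r * real k \<le> real r * (real delta * real k)"
      by (simp add: mult_left_mono)
    with h2 have "real (r * k) < real (n * (Tmax - 3))" by simp
    then have "r * k < n * (Tmax - 3)" by linarith
    then show "enat r < min_rounds Tmax delta k (G n)" unfolding G_def using lower_bound Tm by blast
  qed
  show "\<exists>G :: nat \<Rightarrow> nat tgraph.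
        (\<forall>n. temporal_multigraph Tmax (G n) \<and> temporally_connected (G n)) \<and>
        (\<exists>c1 > 0. \<exists>c2 > 0. \<exists>n0. \<forall>n \<ge> n0.
            c1 * real n \<le> real (card (nodes (G n))) \<and>
            real (card (nodes (G n))) \<le> c2 * real n) \<and>
        (\<exists>n0. \<forall>n \<ge> n0. \<forall>r::nat.
            real r < 1 * real n * (real Tmax - 3) / (real delta * real k) \<longrightarrow>
            enat r < min_rounds Tmax delta k (G n))"
    using A B C by blast
  qed
  show ?thesis
    by (rule exI[of _ "1::real"]) (use main in auto)
qed

end
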